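(* There exist absolute constants $C, c > 0$ and $n_0$ such that for every integer $n \ge n_0$ that is a power of $2$, there is a Boolean function $f:\{0,1\}^{2n}\to\{0,1\}$ satisfying: (1) $\mathrm{Inf}^{-}_i[f] = 0$ for all $i \in \{1,\dots,n\}$; (2) $\mathrm{Inf}^{-}_i[f] \le C/n$ for all $i \in \{n+1,\dots,2n\}$; (3) $\varepsilon(f) \ge c$. In particular, there is no absolute constant $c'>0$ such that every $f:\{0,1\}^m\to\{0,1\}$ has a coordinate $i\in[m]$ with $\mathrm{Inf}^{-}_i[f] \ge c'\,\varepsilon(f)\cdot \frac{\log m}{m}$.
   Context: For $x,y\in\{0,1\}^m$, write $x\preccurlyeq y$ if $x_i\le y_i$ for all $i\in[m]$. A function $g:\{0,1\}^m\to\{0,1\}$ is monotone if $x\preccurlyeq y$ implies $g(x)\le g(y)$. For $x\in\{0,1\}^m$ and $i\in[m]$, $x^{\oplus i}$ denotes $x$ with the $i$-th coordinate flipped. For $f:\{0,1\}^m\to\{0,1\}$, the negative influence of coordinate $i$ is $\mathrm{Inf}^{-}_i[f] := \frac{1}{2^{m-1}}\#\{x\in\{0,1\}^m : f(x) > f(x^{\oplus i}) \text{ and } x\preccurlyeq x^{\oplus i}\}$. The distance to monotonicity is $\varepsilon(f) := \min_{g \text{ monotone}} \Pr_{\mathbf{x}\sim\{0,1\}^m}[f(\mathbf{x})\ne g(\mathbf{x})]$, where $\mathbf{x}$ is uniform. *)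

theory Defs
  imports Complex_Main
begin

text \<open>Points of the cube {0,1}^m are encoded as functions nat => bool that vanish
  outside the coordinate set [m] = {0..<m} (coordinates are 0-indexed).\<close>

definition cube :: "nat \<Rightarrow> (nat \<Rightarrow> bool) set" where
  "cube m = {x. \<forall>i. m \<le> i \<longrightarrow> \<not> x i}"

definition pleq :: "(nat \<Rightarrow> bool) \<Rightarrow> (nat \<Rightarrow> bool) \<Rightarrow> bool" where
  "pleq x y \<longleftrightarrow> (\<forall>i. x i \<longrightarrow> y i)"

definition flip :: "(nat \<Rightarrow> bool) \<Rightarrow> nat \<Rightarrow> (nat \<Rightarrow> bool)" where
  "flip x i = x(i := \<not> x i)"

definition monotone_cube :: "nat \<Rightarrow> ((nat \<Rightarrow> bool) \<Rightarrow> bool) \<Rightarrow> bool" where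
  "monotone_cube m g \<longleftrightarrow>
     (\<forall>x\<in>cube m. \<forall>y\<in>cube m. pleq x y \<longrightarrow> (g x \<longrightarrow> g y))"

definition neg_inf :: "nat \<Rightarrow> ((nat \<Rightarrow> bool) \<Rightarrow> bool) \<Rightarrow> nat \<Rightarrow> real" where
  "neg_inf m f i =
     real (card {x\<in>cube m. f x \<and> \<not> f (flip x i) \<and> pleq x (flip x i)}) / 2 ^ (m - 1)"

definition dist_mono :: "nat \<Rightarrow> ((nat \<Rightarrow> bool) \<Rightarrow> bool) \<Rightarrow> real" where
  "dist_mono m f =
     Min {real (card {x\<in>cube m. f x \<noteq> g x}) / 2 ^ m | g. monotone_cube m g}"

end

theory Submission imports Defs begin

lemma card_cube_pattern:
  assumes "S \<subseteq> {..<m}" "Q \<subseteq> {..<m}" "S \<inter> Q = {}"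
  shows "card {x\<in>cube m. (\<forall>i\<in>S. x i) \<and> (\<forall>i\<in>Q. \<not> x i)} = 2^(m - card S - card Q)"
proof -
  have fS: "finite S" "finite Q" using assms by (meson finite_lessThan finite_subset)+
  have "bij_betw (\<lambda>x. {i. x i} - S) {x\<in>cube m. (\<forall>i\<in>S. x i) \<and> (\<forall>i\<in>Q. \<not> x i)} (Pow ({..<m} - S - Q))"
  proof (rule bij_betw_byWitness[where f' = "\<lambda>T i. i \<in> T \<union> S"])
    show "(\<lambda>x. {i. x i} - S) ` {x\<in>cube m. (\<forall>i\<in>S. x i) \<and> (\<forall>i\<in>Q. \<not> x i)} \<subseteq> Pow ({..<m} - S - Q)"
      by (auto simp: cube_def not_less[symmetric])
    show "(\<lambda>T i. i \<in> T \<union> S) ` Pow ({..<m} - S - Q) \<subseteq> {x\<in>cube m. (\<forall>i\<in>S. x i) \<and> (\<forall>i\<in>Q. \<not> x i)}"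
      using assms by (auto simp: cube_def)
    show "\<forall>x\<in>{x\<in>cube m. (\<forall>i\<in>S. x i) \<and> (\<forall>i\<in>Q. \<not> x i)}. (\<lambda>i. i \<in> ({i. x i} - S) \<union> S) = x"
      by (auto simp: fun_eq_iff)
    show "\<forall>T\<in>Pow ({..<m} - S - Q). {i. i \<in> T \<union> S} - S = T" by auto
  qed
  then have "card {x\<in>cube m. (\<forall>i\<in>S. x i) \<and> (\<forall>i\<in>Q. \<not> x i)} = card (Pow ({..<m} - S - Q))"
    by (rule bij_betw_same_card)
  also have "\<dots> = 2 ^ card ({..<m} - S - Q)" by (simp add: card_Pow)
  also have "card ({..<m} - S - Q) = m - card S - card Q"
  proof -
    have "{..<m} - S - Q = {..<m} - (S \<union> Q)" by auto
    moreover have "card (S \<union> Q) = card S + card Q" using fS assms(3) by (simp add: card_Un_disjoint)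
    ultimately show ?thesis using assms by (simp add: card_Diff_subset fS)
  qed
  finally show ?thesis .
qed

lemma card_cube_sub:
  assumes "S \<subseteq> {..<m}"
  shows "card {x\<in>cube m. \<forall>i\<in>S. x i} = 2^(m - card S)"
  using card_cube_pattern[OF assms, of "{}"] by simp

lemma card_cube: "card (cube m) = 2^m"
  using card_cube_sub[of "{}" m] by simp

lemma finite_cube: "finite (cube m)"
  using card_cube[of m] card.infinite by fastforce


definition blk :: "nat \<Rightarrow> nat \<Rightarrow> nat set" where "blk r j = {j*r..<j*r+r}"
definition fullb :: "nat \<Rightarrow> (nat \<Rightarrow> bool) \<Rightarrow> nat set" where
  "fullb r w = {j. j < 2^(r-1) \<and> (\<forall>t\<in>blk r j. w t)}"
definition pos :: "nat \<Rightarrow> nat \<Rightarrow> (nat \<Rightarrow> bool) \<Rightarrow> nat" where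
  "pos n r w = n + Min (fullb r w) * 2^(r-1) + Max (fullb r w)"
definition ff :: "nat \<Rightarrow> nat \<Rightarrow> (nat \<Rightarrow> bool) \<Rightarrow> bool" where
  "ff n r w = (3 \<le> card (fullb r w) \<or> (card (fullb r w) = 2 \<and> \<not> w (pos n r w)))"

lemma card_blk: "card (blk r j) = r" by (simp add: blk_def)

lemma blk_disj: "a < b \<Longrightarrow> blk r a \<inter> blk r b = {}"
proof -
  assume "a < b"
  then have "a*r + r \<le> b*r" by (metis Suc_leI add.commute mult_Suc mult_le_mono1)
  then show ?thesis by (auto simp: blk_def)
qed

lemma fullb_sub: "fullb r w \<subseteq> {..<2^(r-1)}" by (auto simp: fullb_def)
lemma finite_fullb: "finite (fullb r w)" using fullb_sub finite_subset by blast

lemma fullb_mono: "(\<And>t. w t \<Longrightarrow> w' t) \<Longrightarrow> fullb r w \<subseteq> fullb r w'"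
  by (auto simp: fullb_def)

lemma aux_div: "real n * real z \<le> 2^(2*n-1) \<Longrightarrow> 1 \<le> n \<Longrightarrow> real z / 2^(2*n-1) \<le> 1 / real n"
  by (simp add: divide_simps mult.commute)

lemma aux_nat_real: "(n::nat) * z \<le> 2^(2*n-1) \<Longrightarrow> real n * real z \<le> 2^(2*n-1)"
  by (metis of_nat_le_iff of_nat_mult of_nat_numeral of_nat_power)

lemma aux_final: "(2::nat)^m \<le> 128 * z \<Longrightarrow> v = real z / 2^m \<Longrightarrow> 1/128 \<le> v"
proof -
  assume a: "(2::nat)^m \<le> 128 * z" and v: "v = real z / 2^m"
  have "real ((2::nat)^m) \<le> real (128 * z)" using a by (rule of_nat_mono)
  then have "(2::real)^m \<le> 128 * real z" by simp
  moreover have pos: "(0::real) < 2^m" by simp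
  ultimately have "1 * (2::real)^m \<le> (128 * v) * 2^m" using v by simp
  then have "1 \<le> 128 * v" using pos by (rule mult_right_le_imp_le)
  then show ?thesis by simp
qed

context
  fixes n r :: nat
  assumes r2: "2 \<le> r" and sr: "2^(r-1)*r \<le> n" and ss: "2^(r-1)*2^(r-1) \<le> n" and nr: "2*n \<le> 4^r"
begin

lemma blk_lt: "j < 2^(r-1) \<Longrightarrow> blk r j \<subseteq> {..<n}"
proof -
  assume "j < 2^(r-1)"
  then have "j*r + r \<le> 2^(r-1)*r" by (metis Suc_leI add.commute mult_Suc mult_le_mono1)
  then show ?thesis using sr by (auto simp: blk_def)
qed

lemma fullb_cong: "(\<And>t. t < n \<Longrightarrow> w t = w' t) \<Longrightarrow> fullb r w = fullb r w'"
  using blk_lt unfolding fullb_def by blast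

lemma pos_bounds:
  assumes "card (fullb r w) = 2"
  shows "n \<le> pos n r w" "pos n r w < 2*n"
proof -
  let ?F = "fullb r w" and ?s = "2^(r-1)::nat"
  have ne: "?F \<noteq> {}" using assms by auto
  have "Min ?F < ?s" "Max ?F < ?s" using fullb_sub[of r w] ne finite_fullb Min_in Max_in by blast+
  then have "Min ?F * ?s + Max ?F < (Min ?F + 1) * ?s" by simp
  also have "\<dots> \<le> ?s * ?s" using \<open>Min ?F < ?s\<close> by (intro mult_le_mono1) simp
  finally show "n \<le> pos n r w" "pos n r w < 2*n" using ss by (auto simp: pos_def)
qed


lemma r_le: "2*r \<le> n"
proof -
  have "(2::nat) ^ 1 \<le> 2^(r-1)" using r2 by (intro power_increasing) auto
  then have "2*r \<le> 2^(r-1)*r" by simp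
  then show ?thesis using sr by linarith
qed

lemma pleq_flip: "pleq x (flip x i) \<longleftrightarrow> \<not> x i"
  by (auto simp: pleq_def flip_def)

lemma flip_false: "\<not> x i \<Longrightarrow> flip x i = x(i := True)"
  by (simp add: flip_def)

lemma ff_mono_x:
  assumes "i < n" "ff n r w"
  shows "ff n r (w(i:=True))"
proof -
  let ?F = "fullb r w" and ?F' = "fullb r (w(i:=True))"
  have sub: "?F \<subseteq> ?F'" by (rule fullb_mono) auto
  have fin: "finite ?F'" by (rule finite_fullb)
  have cle: "card ?F \<le> card ?F'" using fin sub by (rule card_mono)
  show ?thesis
  proof (cases "3 \<le> card ?F'")
    case True then show ?thesis by (simp add: ff_def)
  next
    case False
    then have c3: "\<not> 3 \<le> card ?F" using cle by linarith
    then have c2: "card ?F = 2" and nw: "\<not> w (pos n r w)" using assms(2) by (auto simp: ff_def)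
    then have "card ?F' = 2" using False cle by linarith
    then have eq: "?F = ?F'" using sub fin c2 by (metis card_subset_eq)
    then have peq: "pos n r (w(i:=True)) = pos n r w" by (simp add: pos_def)
    have "n \<le> pos n r w" using pos_bounds c2 by blast
    then show ?thesis using \<open>card ?F' = 2\<close> nw peq assms(1) by (simp add: ff_def)
  qed
qed

lemma negx: "i < n \<Longrightarrow> neg_inf (2*n) (ff n r) i = 0"
proof -
  assume i: "i < n"
  have e: "{x\<in>cube (2*n). ff n r x \<and> \<not> ff n r (flip x i) \<and> pleq x (flip x i)} = {}"
  proof -
    have "ff n r (flip x i)" if "ff n r x" "pleq x (flip x i)" for x
    proof -
      have "\<not> x i" using that(2) pleq_flip by simp
      then show ?thesis using ff_mono_x[OF i that(1)] flip_false by simp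
    qed
    then show ?thesis by blast
  qed
  show ?thesis unfolding neg_inf_def e by simp
qed

lemma min_lt_max:
  assumes "card (F::nat set) = 2"
  shows "Min F < Max F" "Min F \<in> F" "Max F \<in> F" "finite F"
proof -
  obtain a b where ab: "F = {a,b}" "a \<noteq> b" using assms[unfolded card_2_iff] by blast
  show fin: "finite F" using ab by simp
  have ne: "F \<noteq> {}" using ab by simp
  show "Min F \<in> F" "Max F \<in> F" using Min_in[OF fin ne] Max_in[OF fin ne] by auto
  have aF: "a \<in> F" "b \<in> F" using ab by auto
  have "Min F \<le> a" "Min F \<le> b" using Min_le[OF fin] aF by auto
  moreover have "a \<le> Max F" "b \<le> Max F" using Max_ge[OF fin] aF by auto
  ultimately show "Min F < Max F" using ab(2) by linarith
qed

lemma negy: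
  assumes i: "n \<le> i" "i < 2*n"
  shows "neg_inf (2*n) (ff n r) i \<le> 1 / real n"
proof -
  let ?s = "2^(r-1)::nat"
  define a where "a = (i-n) div ?s"
  define b where "b = (i-n) mod ?s"
  let ?Z = "{x\<in>cube (2*n). ff n r x \<and> \<not> ff n r (flip x i) \<and> pleq x (flip x i)}"
  have key: "w \<in> ?Z \<Longrightarrow> (\<forall>t\<in>blk r a \<union> blk r b. w t) \<and> a < b" for w
  proof -
    assume wZ: "w \<in> ?Z"
    then have ni: "\<not> w i" and f1: "ff n r w" and f2': "\<not> ff n r (flip w i)"
      using pleq_flip by auto
    have f2: "\<not> ff n r (w(i:=True))" using f2' flip_false[of w i, OF ni] by simp
    have Feq: "fullb r (w(i:=True)) = fullb r w" by (rule fullb_cong) (use i in auto)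
    let ?F = "fullb r w"
    have peq: "pos n r (w(i:=True)) = pos n r w" using Feq by (simp add: pos_def)
    have c2: "card ?F = 2" and nw: "\<not> w (pos n r w)" and wp: "(w(i:=True)) (pos n r w)"
      using f1 f2 Feq peq by (auto simp: ff_def)
    have pi: "pos n r w = i" using nw wp by (cases "pos n r w = i") auto
    have mm: "Min ?F < Max ?F" "Min ?F \<in> ?F" "Max ?F \<in> ?F" using min_lt_max[OF c2] by auto
    have ms: "Max ?F < ?s" using mm(3) fullb_sub by blast
    have "i - n = Min ?F * ?s + Max ?F" using pi by (simp add: pos_def)
    then have "a = Min ?F" "b = Max ?F" using ms by (simp_all add: a_def b_def)
    then have ab1: "a \<in> ?F" "b \<in> ?F" "a < b" using mm by simp_all
    then have "\<forall>t\<in>blk r a. w t" "\<forall>t\<in>blk r b. w t" by (simp_all add: fullb_def)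
    then show ?thesis using ab1(3) by blast
  qed
  have bs: "b < ?s" unfolding b_def by simp
  show ?thesis
  proof (cases "?Z = {}")
    case True then show ?thesis unfolding neg_inf_def True by simp
  next
    case False
    then have ab: "a < b" using key by blast
    have sub2: "blk r a \<union> blk r b \<subseteq> {..<2*n}" using blk_lt[of a] blk_lt[of b] ab bs by auto
    have cu: "card (blk r a \<union> blk r b) = 2*r"
      using blk_disj[OF ab] by (simp add: card_Un_disjoint blk_def)
    have "?Z \<subseteq> {x\<in>cube (2*n). \<forall>t\<in>blk r a \<union> blk r b. x t}" using key by blast
    then have "card ?Z \<le> card {x\<in>cube (2*n). \<forall>t\<in>blk r a \<union> blk r b. x t}"
      by (intro card_mono) (auto intro: finite_subset[OF _ finite_cube])
    also have "\<dots> = 2^(2*n - 2*r)" using card_cube_sub[OF sub2] cu by simp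
    finally have cz: "card ?Z \<le> 2^(2*n-2*r)" .
    have n1: "1 \<le> n" using r_le r2 by linarith
    have "2 * n * 2^(2*n-2*r) \<le> 4^r * 2^(2*n-2*r)" using nr by simp
    also have "\<dots> = 2^(2*n)"
    proof -
      have "(4::nat)^r = 2^(2*r)" by (simp add: power_mult)
      then have "(4::nat)^r * 2^(2*n-2*r) = 2^(2*r + (2*n-2*r))" by (simp only: power_add)
      also have "2*r + (2*n-2*r) = 2*n" using r_le by simp
      finally show ?thesis .
    qed
    also have "\<dots> = 2 * 2^(2*n-1)"
    proof -
      have "2*n = Suc (2*n-1)" using n1 by simp
      then show ?thesis by (metis power_Suc)
    qed
    finally have "n * 2^(2*n-2*r) \<le> 2^(2*n-1)" by simp
    moreover have "n * card ?Z \<le> n * 2^(2*n-2*r)" using cz by (rule mult_le_mono2)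
    ultimately have "n * card ?Z \<le> 2^(2*n-1)" by linarith
    then have "real n * real (card ?Z) \<le> 2^(2*n-1)" by (rule aux_nat_real)
    then show ?thesis unfolding neg_inf_def using n1 by (rule aux_div)
  qed
qed

lemma blk_disj': "a \<noteq> b \<Longrightarrow> blk r a \<inter> blk r b = {}"
  by (metis blk_disj inf_commute nat_neq_iff)

lemma flip_pos:
  assumes "card (fullb r w) = 2" "\<not> w (pos n r w)"
  shows "fullb r (w(pos n r w := True)) = fullb r w" "pos n r (w(pos n r w := True)) = pos n r w"
    "ff n r w" "\<not> ff n r (w(pos n r w := True))"
proof -
  have pn: "n \<le> pos n r w" using pos_bounds assms(1) by blast
  show fe: "fullb r (w(pos n r w := True)) = fullb r w" by (rule fullb_cong) (use pn in auto)
  show pe: "pos n r (w(pos n r w := True)) = pos n r w" using fe by (simp add: pos_def)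
  show "ff n r w" using assms by (simp add: ff_def)
  show "\<not> ff n r (w(pos n r w := True))" using assms fe pe by (simp add: ff_def)
qed

lemma A_le_D:
  assumes g: "monotone_cube (2*n) g"
  defines "A \<equiv> {w\<in>cube (2*n). card (fullb r w) = 2 \<and> \<not> w (pos n r w)}"
  defines "D \<equiv> {x\<in>cube (2*n). ff n r x \<noteq> g x}"
  shows "card A \<le> 2 * card D"
proof -
  define \<phi> where "\<phi> w = w(pos n r w := True)" for w
  have fD: "finite D" unfolding D_def using finite_cube by simp
  have fA: "finite A" unfolding A_def using finite_cube by simp
  have cov: "A \<subseteq> D \<union> {w\<in>A. \<phi> w \<in> D}"
  proof
    fix w assume wA: "w \<in> A"
    then have wc: "w \<in> cube (2*n)" and c2: "card (fullb r w) = 2" and nw: "\<not> w (pos n r w)"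
      by (auto simp: A_def)
    note fp = flip_pos[OF c2 nw]
    have pb: "pos n r w < 2*n" using pos_bounds c2 by blast
    have wc': "\<phi> w \<in> cube (2*n)" using wc pb by (auto simp: cube_def \<phi>_def)
    have le: "pleq w (\<phi> w)" by (auto simp: pleq_def \<phi>_def)
    have "g w \<longrightarrow> g (\<phi> w)" using g wc wc' le by (auto simp: monotone_cube_def)
    then have "ff n r w \<noteq> g w \<or> ff n r (\<phi> w) \<noteq> g (\<phi> w)" using fp(3,4) by (auto simp: \<phi>_def)
    then show "w \<in> D \<union> {w\<in>A. \<phi> w \<in> D}" using wA wc wc' by (auto simp: D_def)
  qed
  have inj: "inj_on \<phi> A"
  proof
    fix v w assume vA: "v \<in> A" and wA: "w \<in> A" and e: "\<phi> v = \<phi> w"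
    from vA have "card (fullb r v) = 2" "\<not> v (pos n r v)" by (auto simp: A_def)
    note fv = flip_pos[OF this]
    from wA have "card (fullb r w) = 2" "\<not> w (pos n r w)" by (auto simp: A_def)
    note fw = flip_pos[OF this]
    have "pos n r v = pos n r w" using fv(2) fw(2) e by (simp add: \<phi>_def)
    then have "v = (\<phi> v)(pos n r v := False)" "w = (\<phi> w)(pos n r v := False)"
      using fv fw \<open>\<not> v (pos n r v)\<close> \<open>\<not> w (pos n r w)\<close> by (auto simp: \<phi>_def fun_eq_iff)
    then show "v = w" using e by simp
  qed
  have "card {w\<in>A. \<phi> w \<in> D} = card (\<phi> ` {w\<in>A. \<phi> w \<in> D})"
    using inj by (intro card_image[symmetric]) (auto intro: inj_on_subset)
  also have "\<dots> \<le> card D" using fD by (intro card_mono) auto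
  finally have c1: "card {w\<in>A. \<phi> w \<in> D} \<le> card D" .
  have "card A \<le> card (D \<union> {w\<in>A. \<phi> w \<in> D})" using cov fD fA by (intro card_mono) auto
  also have "\<dots> \<le> card D + card {w\<in>A. \<phi> w \<in> D}" by (rule card_Un_le)
  finally show ?thesis using c1 by linarith
qed


lemma cardB:
  assumes ab: "a < b" "b < 2^(r-1)"
  defines "p \<equiv> n + a * 2^(r-1) + b"
  shows "2^(r-1) * 2^(2*n-3*r-1) \<le> card {w\<in>cube (2*n). fullb r w = {a,b} \<and> \<not> w p}"
proof -
  let ?s = "2^(r-1)::nat"
  let ?E = "2*n-3*r-1"
  let ?S = "blk r a \<union> blk r b"
  define L where "L = {..<?s} - {a,b}"
  define X where "X = {w\<in>cube (2*n). (\<forall>t\<in>?S. w t) \<and> (\<forall>t\<in>{p}. \<not> w t)}"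
  define Y where "Y l = {w\<in>cube (2*n). (\<forall>t\<in>?S \<union> blk r l. w t) \<and> (\<forall>t\<in>{p}. \<not> w t)}" for l
  have as: "a < ?s" using ab by linarith
  have bl: "blk r a \<subseteq> {..<n}" "blk r b \<subseteq> {..<n}" using blk_lt as ab by auto
  have pl: "n \<le> p" "p < 2*n"
  proof -
    have "a * ?s + b < (a+1) * ?s" using ab by simp
    also have "\<dots> \<le> ?s * ?s" using as by (intro mult_le_mono1) simp
    finally show "n \<le> p" "p < 2*n" using ss by (auto simp: p_def)
  qed
  have rl: "2*r \<le> n" by (rule r_le)
  have cS: "card ?S = 2*r" using blk_disj[OF ab(1)] by (simp add: card_Un_disjoint blk_def)
  have cX: "card X = 2^r * 2^?E"
  proof -
    have "card X = 2^(2*n - card ?S - card {p})" unfolding X_def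
      by (rule card_cube_pattern) (use bl pl in auto)
    also have "2*n - card ?S - card {p} = r + ?E" using cS rl by simp
    finally show ?thesis by (simp add: power_add)
  qed
  have cY: "card (Y l) = 2^?E" if l: "l \<in> L" for l
  proof -
    have ll: "l < ?s" "l \<noteq> a" "l \<noteq> b" using l by (auto simp: L_def)
    have bll: "blk r l \<subseteq> {..<n}" using blk_lt ll by auto
    have dj: "?S \<inter> blk r l = {}" using blk_disj'[of a l] blk_disj'[of b l] ll by auto
    then have "card (?S \<union> blk r l) = card ?S + card (blk r l)"
      by (intro card_Un_disjoint) (auto simp: blk_def)
    then have "card (?S \<union> blk r l) = 3*r" using cS card_blk[of r l] by simp
    moreover have "card (Y l) = 2^(2*n - card (?S \<union> blk r l) - card {p})" unfolding Y_def
      by (rule card_cube_pattern) (use bl bll pl in auto)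
    ultimately show ?thesis by simp
  qed
  have fY: "finite (Y l)" for l unfolding Y_def by (rule finite_subset[OF _ finite_cube]) blast
  have fL: "finite L" by (simp add: L_def)
  have cL: "card L \<le> ?s"
  proof -
    have "card L \<le> card {..<?s}" by (intro card_mono) (auto simp: L_def)
    then show ?thesis by simp
  qed
  have "card (\<Union>l\<in>L. Y l) \<le> (\<Sum>l\<in>L. card (Y l))" by (rule card_UN_le[OF fL])
  also have "\<dots> = (\<Sum>l\<in>L. 2^?E)" by (rule sum.cong) (simp_all add: cY)
  also have "\<dots> = card L * 2^?E" by simp
  also have "\<dots> \<le> ?s * 2^?E" using cL by simp
  finally have cU: "card (\<Union>l\<in>L. Y l) \<le> ?s * 2^?E" .
  have sub: "X - (\<Union>l\<in>L. Y l) \<subseteq> {w\<in>cube (2*n). fullb r w = {a,b} \<and> \<not> w p}"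
  proof
    fix w assume w: "w \<in> X - (\<Union>l\<in>L. Y l)"
    then have wX: "w \<in> cube (2*n)" "\<forall>t\<in>?S. w t" "\<not> w p" by (auto simp: X_def)
    have "fullb r w = {a,b}"
    proof
      show "{a,b} \<subseteq> fullb r w" using wX ab as by (auto simp: fullb_def)
      show "fullb r w \<subseteq> {a,b}"
      proof
        fix l assume lf: "l \<in> fullb r w"
        show "l \<in> {a,b}"
        proof (rule ccontr)
          assume "l \<notin> {a,b}"
          then have "l \<in> L" using lf by (auto simp: L_def fullb_def)
          moreover have "w \<in> Y l" using wX lf by (auto simp: Y_def fullb_def)
          ultimately show False using w by blast
        qed
      qed
    qed
    then show "w \<in> {w\<in>cube (2*n). fullb r w = {a,b} \<and> \<not> w p}" using wX by blast
  qed
  have fin2: "finite {w\<in>cube (2*n). fullb r w = {a,b} \<and> \<not> w p}" using finite_cube by simp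
  have "card X - card (\<Union>l\<in>L. Y l) \<le> card (X - (\<Union>l\<in>L. Y l))"
    by (rule diff_card_le_card_Diff) (use fL fY in auto)
  also have "\<dots> \<le> card {w\<in>cube (2*n). fullb r w = {a,b} \<and> \<not> w p}" using fin2 sub by (rule card_mono)
  finally have "2^r * 2^?E - ?s * 2^?E \<le> card {w\<in>cube (2*n). fullb r w = {a,b} \<and> \<not> w p}"
    using cX cU by linarith
  moreover have "(2::nat)^r = 2 * ?s" using r2 by (cases r) simp_all
  then have "(2::nat)^r * 2^?E - ?s * 2^?E = ?s * 2^?E" by simp
  ultimately show ?thesis by linarith
qed


lemma card_A_lower:
  "2^(2*n-6) \<le> card {w\<in>cube (2*n). card (fullb r w) = 2 \<and> \<not> w (pos n r w)}"
proof -
  let ?s = "2^(r-1)::nat" and ?h = "2^(r-2)::nat"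
  let ?E = "2*n-3*r-1"
  let ?A = "{w\<in>cube (2*n). card (fullb r w) = 2 \<and> \<not> w (pos n r w)}"
  define P where "P = {..<?h} \<times> {?h..<?s}"
  define B where "B q = {w\<in>cube (2*n). fullb r w = {fst q, snd q} \<and> \<not> w (n + fst q * ?s + snd q)}" for q
  have sh: "?s = 2 * ?h"
  proof -
    have "r - 1 = Suc (r-2)" using r2 by simp
    then show ?thesis by (simp only: power_Suc)
  qed
  have Pab: "fst q < snd q" "snd q < ?s" if "q \<in> P" for q using that by (auto simp: P_def)
  have fP: "finite P" by (simp add: P_def)
  have cP: "card P = ?h * ?h" using sh by (simp add: P_def card_cartesian_product)
  have fB: "finite (B q)" for q unfolding B_def using finite_cube by simp
  have dis: "\<forall>q\<in>P. \<forall>q'\<in>P. q \<noteq> q' \<longrightarrow> B q \<inter> B q' = {}"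
  proof (intro ballI impI)
    fix q q' assume q: "q \<in> P" and q': "q' \<in> P" and ne: "q \<noteq> q'"
    show "B q \<inter> B q' = {}"
    proof (rule ccontr)
      assume "B q \<inter> B q' \<noteq> {}"
      then obtain w where "w \<in> B q" "w \<in> B q'" by blast
      then have "{fst q, snd q} = {fst q', snd q'}" by (auto simp: B_def)
      then have "q = q'" using Pab[OF q] Pab[OF q'] by (cases q, cases q') (auto simp: doubleton_eq_iff)
      then show False using ne by simp
    qed
  qed
  have subA: "(\<Union>q\<in>P. B q) \<subseteq> ?A"
  proof
    fix w assume "w \<in> (\<Union>q\<in>P. B q)"
    then obtain q where q: "q \<in> P" and w: "w \<in> B q" by blast
    have fw: "fullb r w = {fst q, snd q}" and nw: "\<not> w (n + fst q * ?s + snd q)" and wc: "w \<in> cube (2*n)"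
      using w by (auto simp: B_def)
    have lt: "fst q < snd q" using Pab[OF q] by simp
    have "Min (fullb r w) = fst q" "Max (fullb r w) = snd q" using fw lt by auto
    then have "pos n r w = n + fst q * ?s + snd q" by (simp add: pos_def)
    then show "w \<in> ?A" using fw lt nw wc by simp
  qed
  have "card (\<Union>q\<in>P. B q) = (\<Sum>q\<in>P. card (B q))" using fP fB dis by (intro card_UN_disjoint) auto
  also have "\<dots> \<ge> (\<Sum>q\<in>P. ?s * 2^?E)"
  proof (rule sum_mono)
    fix q assume q: "q \<in> P"
    show "?s * 2^?E \<le> card (B q)" using cardB[OF Pab[OF q]] by (simp add: B_def)
  qed
  finally have "card P * (?s * 2^?E) \<le> card (\<Union>q\<in>P. B q)" by simp
  also have "\<dots> \<le> card ?A" using subA finite_cube by (intro card_mono) auto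
  finally have le: "?h * ?h * (?s * 2^?E) \<le> card ?A" using cP by simp
  have "(2::nat)^(2*n-6) = 2^((r-2) + (r-2) + ((r-1) + ?E))"
  proof -
    have "2*n-6 = (r-2) + (r-2) + ((r-1) + ?E)" using r_le r2 by linarith
    then show ?thesis by simp
  qed
  also have "\<dots> = ?h * ?h * (?s * 2^?E)" by (simp only: power_add)
  finally show ?thesis using le by simp
qed

lemma dist_ff: "1/128 \<le> dist_mono (2*n) (ff n r)"
proof -
  let ?m = "2*n"
  let ?V = "{real (card {x\<in>cube ?m. ff n r x \<noteq> g x}) / 2 ^ ?m | g. monotone_cube ?m g}"
  have fin: "finite ?V"
  proof (rule finite_subset)
    show "?V \<subseteq> (\<lambda>k. real k / 2^?m) ` {..2^?m}"
    proof
      fix v assume "v \<in> ?V"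
      then obtain g where v: "v = real (card {x\<in>cube ?m. ff n r x \<noteq> g x}) / 2 ^ ?m" by blast
      have "card {x\<in>cube ?m. ff n r x \<noteq> g x} \<le> card (cube ?m)"
        using finite_cube by (intro card_mono) auto
      then show "v \<in> (\<lambda>k. real k / 2^?m) ` {..2^?m}" using v card_cube by auto
    qed
  qed simp
  have ne: "?V \<noteq> {}"
  proof -
    have "monotone_cube ?m (\<lambda>_. True)" by (simp add: monotone_cube_def)
    then show ?thesis by blast
  qed
  have all: "1/128 \<le> v" if "v \<in> ?V" for v
  proof -
    obtain g where g: "monotone_cube ?m g" and v: "v = real (card {x\<in>cube ?m. ff n r x \<noteq> g x}) / 2 ^ ?m"
      using \<open>v \<in> ?V\<close> by blast
    have c1: "2^(2*n-6) \<le> 2 * card {x\<in>cube ?m. ff n r x \<noteq> g x}"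
      using card_A_lower A_le_D[OF g] by (meson le_trans)
    have "(2::nat)^?m = 64 * 2^(2*n-6)"
    proof -
      have h6: "6 + (2*n-6) = 2*n" using r_le r2 by linarith
      have "(2::nat)^?m = 2^(6 + (2*n-6))" by (simp only: h6)
      also have "\<dots> = 2^6 * 2^(2*n-6)" by (simp only: power_add)
      finally show ?thesis by simp
    qed
    then have "(2::nat)^?m \<le> 128 * card {x\<in>cube ?m. ff n r x \<noteq> g x}" using c1 by linarith
    then show ?thesis using v by (rule aux_final)
  qed
  show ?thesis unfolding dist_mono_def using Min_ge_iff[OF fin ne] all by blast
qed

end


lemma aux_fin: "c * (1/128) * (L / (2*x)) \<le> 1/x \<Longrightarrow> (0::real) < x \<Longrightarrow> c * L \<le> 256"
  by (simp add: divide_simps mult.commute)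

lemma params:
  assumes k: "2 \<le> k"
  defines "r \<equiv> k div 2 + 1"
  shows "2 \<le> r" "2^(r-1)*r \<le> (2::nat)^k" "2^(r-1)*2^(r-1) \<le> (2::nat)^k" "2*2^k \<le> (4::nat)^r"
proof -
  define q where "q = k div 2"
  have rq: "r = q + 1" "r - 1 = q" by (simp_all add: r_def q_def)
  have q2: "2*q \<le> k" "k \<le> 2*q+1" by (simp_all add: q_def)
  show "2 \<le> r" using k by (simp add: r_def)
  have e1: "(2::nat)^q*2^q = 2^(2*q)" by (simp only: mult_2 power_add)
  show "2^(r-1)*2^(r-1) \<le> (2::nat)^k" unfolding rq(2) e1 using q2 by (intro power_increasing) auto
  have "q + 1 \<le> (2::nat)^q" using less_exp[of q] by linarith
  also have "(2::nat)^q \<le> 2^(k-q)" using q2 by (intro power_increasing) auto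
  finally have "q+1 \<le> (2::nat)^(k-q)" .
  then have "(2::nat)^q * (q+1) \<le> 2^q * 2^(k-q)" by (rule mult_le_mono2)
  also have "\<dots> = 2^(q + (k-q))" by (simp only: power_add)
  also have "q + (k-q) = k" using q2 by simp
  finally show "2^(r-1)*r \<le> (2::nat)^k" unfolding rq(2) by (simp add: rq(1))
  have "(4::nat)^r = 2^(2*(q+1))" unfolding rq(1) by (simp only: power_mult) simp
  moreover have "2*(2::nat)^k = 2^(k+1)" by simp
  moreover have "(2::nat)^(k+1) \<le> 2^(2*(q+1))" using q2 by (intro power_increasing) auto
  ultimately show "2*2^k \<le> (4::nat)^r" by simp
qed

lemma construct:
  assumes k: "2 \<le> k" and n: "n = 2^k"
  shows "\<exists>f :: (nat \<Rightarrow> bool) \<Rightarrow> bool.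
                 (\<forall>i<n. neg_inf (2 * n) f i = 0) \<and>
                 (\<forall>i. n \<le> i \<and> i < 2 * n \<longrightarrow> neg_inf (2 * n) f i \<le> 1 / real n) \<and>
                 dist_mono (2 * n) f \<ge> 1/128"
proof -
  define r where "r = k div 2 + 1"
  note p = params[OF k, folded r_def n]
  show ?thesis
    using negx[OF p] negy[OF p] dist_ff[OF p] by blast
qed

theorem mainTheorem1:
  shows "(\<exists>C c :: real. \<exists>n0 :: nat. C > 0 \<and> c > 0 \<and>
           (\<forall>n k. n \<ge> n0 \<and> n = 2 ^ k \<longrightarrow>
              (\<exists>f :: (nat \<Rightarrow> bool) \<Rightarrow> bool.
                 (\<forall>i<n. neg_inf (2 * n) f i = 0) \<and>
                 (\<forall>i. n \<le> i \<and> i < 2 * n \<longrightarrow> neg_inf (2 * n) f i \<le> C / real n) \<and>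
                 dist_mono (2 * n) f \<ge> c)))
       \<and> \<not> (\<exists>c' :: real. c' > 0 \<and>
           (\<forall>m :: nat. \<forall>f :: (nat \<Rightarrow> bool) \<Rightarrow> bool. m \<ge> 1 \<longrightarrow>
              (\<exists>i<m. neg_inf m f i \<ge> c' * dist_mono m f * (ln (real m) / real m))))"
proof
  show "\<exists>C c :: real. \<exists>n0 :: nat. C > 0 \<and> c > 0 \<and>
           (\<forall>n k. n \<ge> n0 \<and> n = 2 ^ k \<longrightarrow>
              (\<exists>f :: (nat \<Rightarrow> bool) \<Rightarrow> bool.
                 (\<forall>i<n. neg_inf (2 * n) f i = 0) \<and>
                 (\<forall>i. n \<le> i \<and> i < 2 * n \<longrightarrow> neg_inf (2 * n) f i \<le> C / real n) \<and>
                 dist_mono (2 * n) f \<ge> c))"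
  proof -
    have P1: "\<forall>n k. n \<ge> (4::nat) \<and> n = 2 ^ k \<longrightarrow>
              (\<exists>f :: (nat \<Rightarrow> bool) \<Rightarrow> bool.
                 (\<forall>i<n. neg_inf (2 * n) f i = 0) \<and>
                 (\<forall>i. n \<le> i \<and> i < 2 * n \<longrightarrow> neg_inf (2 * n) f i \<le> 1 / real n) \<and>
                 dist_mono (2 * n) f \<ge> 1/128)"
    proof (intro allI impI)
      fix n k :: nat assume a: "4 \<le> n \<and> n = 2^k"
      have "2 \<le> k"
      proof (rule ccontr)
        assume "\<not> 2 \<le> k"
        then have "k = 0 \<or> k = 1" by auto
        then show False using a by auto
      qed
      then show "\<exists>f :: (nat \<Rightarrow> bool) \<Rightarrow> bool.
                 (\<forall>i<n. neg_inf (2 * n) f i = 0) \<and>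
                 (\<forall>i. n \<le> i \<and> i < 2 * n \<longrightarrow> neg_inf (2 * n) f i \<le> 1 / real n) \<and>
                 dist_mono (2 * n) f \<ge> 1/128"
        using construct a by blast
    qed
    show ?thesis
      by (rule exI[of _ "1::real"], rule exI[of _ "1/128::real"], rule exI[of _ "4::nat"])
        (intro conjI, simp, simp, rule P1)
  qed
next
  show "\<not> (\<exists>c' :: real. c' > 0 \<and>
           (\<forall>m :: nat. \<forall>f :: (nat \<Rightarrow> bool) \<Rightarrow> bool. m \<ge> 1 \<longrightarrow>
              (\<exists>i<m. neg_inf m f i \<ge> c' * dist_mono m f * (ln (real m) / real m))))"
  proof
    assume "\<exists>c' :: real. c' > 0 \<and>
           (\<forall>m :: nat. \<forall>f :: (nat \<Rightarrow> bool) \<Rightarrow> bool. m \<ge> 1 \<longrightarrow>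
              (\<exists>i<m. neg_inf m f i \<ge> c' * dist_mono m f * (ln (real m) / real m)))"
    then obtain c' :: real where c': "c' > 0" and H: "\<And>m f. m \<ge> 1 \<Longrightarrow>
              (\<exists>i<m. neg_inf m f i \<ge> c' * dist_mono m f * (ln (real m) / real m))" by blast
    obtain N :: nat where N: "256 / (c' * ln 2) < real N" using reals_Archimedean2 by blast
    define k where "k = N + 2"
    define n :: nat where "n = 2^k"
    have k2: "2 \<le> k" by (simp add: k_def)
    obtain f where f1: "\<forall>i<n. neg_inf (2 * n) f i = 0"
      and f2: "\<forall>i. n \<le> i \<and> i < 2 * n \<longrightarrow> neg_inf (2 * n) f i \<le> 1 / real n"
      and f3: "dist_mono (2 * n) f \<ge> 1/128"
      using construct[OF k2 n_def] by blast
    have npos: "(0::real) < real n" by (simp add: n_def)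
    have lnm: "ln (real (2*n)) = real (k+1) * ln 2"
    proof -
      have "real (2*n) = 2^(k+1)" by (simp add: n_def)
      then show ?thesis using ln_realpow[of "2::real" "k+1"] by simp
    qed
    have cl: "0 < c' * ln 2" using c' by simp
    have "256 < real N * (c' * ln 2)" using N by (simp add: pos_divide_less_eq[OF cl])
    moreover have "real N * (c' * ln 2) \<le> real (k+1) * (c' * ln 2)"
      using cl by (intro mult_right_mono) (simp_all add: k_def)
    moreover have "c' * ln (real (2*n)) = real (k+1) * (c' * ln 2)" unfolding lnm by simp
    ultimately have big: "c' * ln (real (2*n)) > 256" by linarith
    have lpos: "ln (real (2*n)) > 0" using npos by simp
    obtain i where i: "i < 2*n" and ge: "neg_inf (2*n) f i \<ge> c' * dist_mono (2*n) f * (ln (real (2*n)) / real (2*n))"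
      using H[of "2*n" f] npos by auto
    have "c' * (1/128) * (ln (real (2*n)) / real (2*n)) \<le> c' * dist_mono (2*n) f * (ln (real (2*n)) / real (2*n))"
      using f3 c' lpos npos by (intro mult_right_mono mult_left_mono) auto
    with ge have ge2: "c' * (1/128) * (ln (real (2*n)) / real (2*n)) \<le> neg_inf (2*n) f i" by linarith
    have rpos: "c' * (1/128) * (ln (real (2*n)) / real (2*n)) > 0" using c' lpos npos by simp
    show False
    proof (cases "i < n")
      case True then show False using f1 ge2 rpos by auto
    next
      case False
      then have "neg_inf (2*n) f i \<le> 1 / real n" using f2 i by auto
      with ge2 have "c' * (1/128) * (ln (real (2*n)) / real (2*n)) \<le> 1 / real n" by linarith
      moreover have "real (2*n) = 2 * real n" by simp
      ultimately have "c' * ln (real (2*n)) \<le> 256" using npos aux_fin by metis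
      then show False using big by linarith
    qed
  qed
qed

end
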